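(* For every integer $r\ge 0$: \begin{align*} \mathrm{LCD}[6r+3,2] &\ge 4r+2,\\ \mathrm{LCD}[6r+4,2] &\ge 4r+2,\\ \mathrm{LCD}[6r+5,2] &\ge 4r+2,\\ \mathrm{LCD}[6r+6,2] &\ge 4r+3,\\ \mathrm{LCD}[6r+7,2] &\ge 4r+4,\\ \mathrm{LCD}[6r+8,2] &\ge 4r+5. \end{align*}
   Context: All codes are binary linear codes, i.e. subspaces of $\mathbb{F}_2^n$; an $[n,k,d]$ code is one of length $n$, dimension $k$ and minimum Hamming distance $d$. A linear code $C$ is an LCD code if $C\cap C^\perp=\{0\}$, where $C^\perp$ is the dual with respect to the standard dot product. For positive integers $n\ge k$, $\mathrm{LCD}[n,k]$ denotes the largest $d$ such that there exists a binary $[n,k,d]$ LCD code. *)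

theory Defs
  imports "HOL-Library.Z2"
begin

definition F2vec :: "nat \<Rightarrow> (nat \<Rightarrow> bit) set" where
  "F2vec n = {x. \<forall>i\<ge>n. x i = 0}"

definition vzero :: "nat \<Rightarrow> bit" where
  "vzero = (\<lambda>i. 0)"

definition vadd :: "(nat \<Rightarrow> bit) \<Rightarrow> (nat \<Rightarrow> bit) \<Rightarrow> (nat \<Rightarrow> bit)" where
  "vadd x y = (\<lambda>i. x i + y i)"

definition vscale :: "bit \<Rightarrow> (nat \<Rightarrow> bit) \<Rightarrow> (nat \<Rightarrow> bit)" where
  "vscale c x = (\<lambda>i. c * x i)"

definition linear_code :: "nat \<Rightarrow> (nat \<Rightarrow> bit) set \<Rightarrow> bool" where
  "linear_code n C \<longleftrightarrow> C \<subseteq> F2vec n \<and> vzero \<in> C \<and>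
     (\<forall>x\<in>C. \<forall>y\<in>C. vadd x y \<in> C) \<and> (\<forall>c x. x \<in> C \<longrightarrow> vscale c x \<in> C)"

definition lin_comb :: "(nat \<Rightarrow> bit) set \<Rightarrow> ((nat \<Rightarrow> bit) \<Rightarrow> bit) \<Rightarrow> (nat \<Rightarrow> bit)" where
  "lin_comb B c = (\<lambda>i. \<Sum>b\<in>B. c b * b i)"

definition lin_indep :: "(nat \<Rightarrow> bit) set \<Rightarrow> bool" where
  "lin_indep B \<longleftrightarrow> (\<forall>c. lin_comb B c = vzero \<longrightarrow> (\<forall>b\<in>B. c b = 0))"

definition lin_span :: "(nat \<Rightarrow> bit) set \<Rightarrow> (nat \<Rightarrow> bit) set" where
  "lin_span B = {lin_comb B c | c. True}"

definition code_dim :: "(nat \<Rightarrow> bit) set \<Rightarrow> nat \<Rightarrow> bool" where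
  "code_dim C k \<longleftrightarrow> (\<exists>B. finite B \<and> B \<subseteq> C \<and> card B = k \<and> lin_indep B \<and> lin_span B = C)"

definition hweight :: "(nat \<Rightarrow> bit) \<Rightarrow> nat" where
  "hweight x = card {i. x i \<noteq> 0}"

definition hdist :: "(nat \<Rightarrow> bit) \<Rightarrow> (nat \<Rightarrow> bit) \<Rightarrow> nat" where
  "hdist x y = card {i. x i \<noteq> y i}"

definition min_dist :: "(nat \<Rightarrow> bit) set \<Rightarrow> nat" where
  "min_dist C = Min {hdist x y | x y. x \<in> C \<and> y \<in> C \<and> x \<noteq> y}"

definition dotp :: "nat \<Rightarrow> (nat \<Rightarrow> bit) \<Rightarrow> (nat \<Rightarrow> bit) \<Rightarrow> bit" where
  "dotp n x y = (\<Sum>i<n. x i * y i)"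

definition dual_code :: "nat \<Rightarrow> (nat \<Rightarrow> bit) set \<Rightarrow> (nat \<Rightarrow> bit) set" where
  "dual_code n C = {y \<in> F2vec n. \<forall>x\<in>C. dotp n x y = 0}"

definition is_LCD :: "nat \<Rightarrow> (nat \<Rightarrow> bit) set \<Rightarrow> bool" where
  "is_LCD n C \<longleftrightarrow> C \<inter> dual_code n C = {vzero}"

definition LCD_code :: "nat \<Rightarrow> nat \<Rightarrow> nat \<Rightarrow> (nat \<Rightarrow> bit) set \<Rightarrow> bool" where
  "LCD_code n k d C \<longleftrightarrow> linear_code n C \<and> code_dim C k \<and> min_dist C = d \<and> is_LCD n C"

definition LCD :: "nat \<Rightarrow> nat \<Rightarrow> nat" where
  "LCD n k = (GREATEST d. \<exists>C. LCD_code n k d C)"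

end

theory Submission imports Defs begin

definition ind :: "nat set \<Rightarrow> nat \<Rightarrow> bit" where
  "ind S = (\<lambda>i. if i \<in> S then 1 else 0)"

lemma of_nat_bit: "((of_nat k)::bit) = 0 \<longleftrightarrow> even k"
  by (induction k) auto

lemma ind_add: "vadd (ind S) (ind T) = ind ((S - T) \<union> (T - S))"
  by (auto simp: vadd_def ind_def fun_eq_iff)

lemma ind_inj: "ind S = ind T \<longleftrightarrow> S = T"
  by (auto simp: ind_def fun_eq_iff split: if_splits)

lemma vzero_ind: "vzero = ind {}"
  by (auto simp: vzero_def ind_def)

lemma hdist_ind: "hdist (ind S) (ind T) = card ((S - T) \<union> (T - S))"
  unfolding hdist_def ind_def by (rule arg_cong[where f=card]) auto

lemma ind_F2: "S \<subseteq> {..<n} \<Longrightarrow> ind S \<in> F2vec n"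
  by (auto simp: F2vec_def ind_def)

lemma dotp_ind: "S \<subseteq> {..<n} \<Longrightarrow> dotp n (ind S) (ind T) = of_nat (card (S \<inter> T))"
proof -
  assume S: "S \<subseteq> {..<n}"
  have "dotp n (ind S) (ind T) = (\<Sum>i<n. of_bool (i \<in> S \<inter> T))"
    unfolding dotp_def ind_def by (rule sum.cong) auto
  also have "\<dots> = of_nat (card ({..<n} \<inter> (S \<inter> T)))"
    by (simp add: Int_def)
  also have "{..<n} \<inter> (S \<inter> T) = S \<inter> T" using S by auto
  finally show ?thesis .
qed

lemma vscale_ind: "vscale c (ind S) = ind {} \<or> vscale c (ind S) = ind S"
  by (cases c) (auto simp: vscale_def ind_def fun_eq_iff)

lemma LCD_ge:
  assumes "LCD_code n 2 d C" shows "d \<le> LCD n 2"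
proof -
  have bound: "\<forall>y. (\<exists>C. LCD_code n 2 y C) \<longrightarrow> y \<le> n"
  proof (intro allI impI)
    fix y assume "\<exists>C. LCD_code n 2 y C"
    then obtain C where C: "LCD_code n 2 y C" by blast
    then have lc: "linear_code n C" and cd: "code_dim C 2" and md: "min_dist C = y"
      by (auto simp: LCD_code_def)
    from cd obtain B where B: "finite B" "B \<subseteq> C" "card B = 2"
      unfolding code_dim_def by blast
    then obtain x z where xz: "x \<in> C" "z \<in> C" "x \<noteq> z"
      by (metis card_2_iff insert_subset)
    have hb: "hdist u v \<le> n" if "u \<in> C" "v \<in> C" for u v
    proof -
      have "u \<in> F2vec n" "v \<in> F2vec n" using lc that by (auto simp: linear_code_def)
      then have "{i. u i \<noteq> v i} \<subseteq> {..<n}" by (clarsimp simp: F2vec_def) (metis leI)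
      then show ?thesis unfolding hdist_def by (metis card_lessThan card_mono finite_lessThan)
    qed
    let ?D = "{hdist x y | x y. x \<in> C \<and> y \<in> C \<and> x \<noteq> y}"
    have fin: "finite ?D" by (rule finite_subset[of _ "{..n}"]) (auto dest: hb)
    have "hdist x z \<in> ?D" using xz by blast
    then have "Min ?D \<le> hdist x z" using fin by simp
    then show "y \<le> n" using md hb[OF xz(1,2)] unfolding min_dist_def by simp
  qed
  show ?thesis unfolding LCD_def
    by (rule Greatest_le_nat[where b=n]) (use assms bound in blast)+
qed

lemma main_code:
  fixes a b c n :: nat
  assumes n: "a+b+c \<le> n" and pos: "0<a" "0<b" "0<c" and odd: "odd (a*b+b*c+c*a)"
  shows "min (a+b) (min (b+c) (a+c)) \<le> LCD n 2"
proof -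
  define U where "U = {..<a} \<union> {a+b..<a+b+c}"
  define V where "V = {a..<a+b+c}"
  define W where "W = {..<a+b}"
  define C where "C = ind ` {{}, U, V, W}"
  have UV: "(U - V) \<union> (V - U) = W" unfolding U_def V_def W_def by auto
  have UW: "(U - W) \<union> (W - U) = V" unfolding U_def V_def W_def by auto
  have VW: "(V - W) \<union> (W - V) = U" unfolding U_def V_def W_def by auto
  have VU: "(V - U) \<union> (U - V) = W" using UV by auto
  have WU: "(W - U) \<union> (U - W) = V" using UW by auto
  have WV: "(W - V) \<union> (V - W) = U" using VW by auto
  have sub: "U \<subseteq> {..<n}" "V \<subseteq> {..<n}" "W \<subseteq> {..<n}"
    using n unfolding U_def V_def W_def by auto
  have cU: "card U = a + c" unfolding U_def
    by (subst card_Un_disjoint) auto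
  have cV: "card V = b + c" unfolding V_def by simp
  have cW: "card W = a + b" unfolding W_def by simp
  have ne: "U \<noteq> {}" "V \<noteq> {}" "W \<noteq> {}" "U \<noteq> V" "U \<noteq> W" "V \<noteq> W"
    using cU cV cW pos UV UW VW by auto
  have iU: "ind U \<noteq> ind V" "ind U \<noteq> ind W" "ind V \<noteq> ind W"
      "ind U \<noteq> vzero" "ind V \<noteq> vzero" "ind W \<noteq> vzero"
    using ne by (auto simp: ind_inj vzero_ind)
  have lin: "linear_code n C"
  proof -
    have "C \<subseteq> F2vec n" unfolding C_def using sub by (auto intro: ind_F2)
    moreover have "vzero \<in> C" unfolding C_def vzero_ind by simp
    moreover have "\<forall>x\<in>C. \<forall>y\<in>C. vadd x y \<in> C"
      unfolding C_def by (auto simp: ind_add UV UW VW VU WU WV)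
    moreover have "\<forall>c x. x \<in> C \<longrightarrow> vscale c x \<in> C"
      unfolding C_def using vscale_ind by blast
    ultimately show ?thesis unfolding linear_code_def by blast
  qed
  have dim: "code_dim C 2"
  proof -
    define B where "B = {ind U, ind V}"
    have lc: "lin_comb B f = vadd (vscale (f (ind U)) (ind U)) (vscale (f (ind V)) (ind V))" for f
      unfolding lin_comb_def B_def vadd_def vscale_def
      by (rule ext, subst sum.insert) (use iU(1) in auto)
    have "a \<notin> U" "a \<in> V" "0 \<in> U" "0 \<notin> V" unfolding U_def V_def using pos by auto
    then have pts: "ind U 0 = 1" "ind V 0 = 0" "ind U a = 0" "ind V a = 1"
      by (auto simp: ind_def)
    have li: "lin_indep B"
      unfolding lin_indep_def
    proof (intro allI impI ballI)
      fix f b assume z: "lin_comb B f = vzero" and b: "b \<in> B"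
      have "lin_comb B f 0 = 0" "lin_comb B f a = 0" using z by (auto simp: vzero_def)
      then have "f (ind U) = 0" "f (ind V) = 0" unfolding lc using pts
        by (auto simp: vadd_def vscale_def)
      then show "f b = 0" using b B_def by auto
    qed
    have sp: "lin_span B = C"
    proof
      show "lin_span B \<subseteq> C"
      proof
        fix x assume "x \<in> lin_span B"
        then obtain f where x: "x = lin_comb B f" unfolding lin_span_def by blast
        show "x \<in> C" unfolding x lc
          using lin unfolding linear_code_def C_def by (metis imageI insertCI)
      qed
      show "C \<subseteq> lin_span B"
      proof
        fix x assume "x \<in> C"
        then consider "x = ind {}" | "x = ind U" | "x = ind V" | "x = ind W"
          unfolding C_def by blast
        then show "x \<in> lin_span B"
        proof cases
          case 1 then show ?thesis unfolding lin_span_def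
            by (intro CollectI exI[of _ "\<lambda>_. 0"]) (auto simp: lc vadd_def vscale_def ind_def fun_eq_iff)
        next
          case 2 then show ?thesis unfolding lin_span_def
            by (intro CollectI exI[of _ "\<lambda>y. if y = ind U then 1 else 0"]) (use iU(1) in \<open>auto simp: lc vadd_def vscale_def fun_eq_iff\<close>)
        next
          case 3 then show ?thesis unfolding lin_span_def
            by (intro CollectI exI[of _ "\<lambda>y. if y = ind V then 1 else 0"]) (use iU(1) in \<open>auto simp: lc vadd_def vscale_def fun_eq_iff\<close>)
        next
          case 4
          have "x = vadd (ind U) (ind V)" using 4 by (simp add: ind_add UV)
          then show ?thesis unfolding lin_span_def
            by (intro CollectI exI[of _ "\<lambda>y. 1"]) (auto simp: lc vadd_def vscale_def fun_eq_iff)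
        qed
      qed
    qed
    have "card B = 2" using iU B_def by simp
    then show ?thesis unfolding code_dim_def
      using li sp by (intro exI[of _ B]) (auto simp: B_def C_def)
  qed
  have md: "min_dist C = min (a+b) (min (b+c) (a+c))"
  proof -
    have "{hdist x y | x y. x \<in> C \<and> y \<in> C \<and> x \<noteq> y} = {card U, card V, card W}"
    proof
      show "{hdist x y | x y. x \<in> C \<and> y \<in> C \<and> x \<noteq> y} \<subseteq> {card U, card V, card W}"
        unfolding C_def using ne
        by (auto simp: hdist_ind UV UW VW VU WU WV ind_inj)
      show "{card U, card V, card W} \<subseteq> {hdist x y | x y. x \<in> C \<and> y \<in> C \<and> x \<noteq> y}"
      proof -
        have "hdist (ind {}) (ind U) = card U" "hdist (ind {}) (ind V) = card V"
             "hdist (ind {}) (ind W) = card W" by (simp_all add: hdist_ind)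
        moreover have "ind {} \<in> C" "ind U \<in> C" "ind V \<in> C" "ind W \<in> C" unfolding C_def by auto
        moreover have "ind {} \<noteq> ind U" "ind {} \<noteq> ind V" "ind {} \<noteq> ind W"
          using iU vzero_ind by auto
        ultimately have "hdist (ind {}) (ind U) \<in> {hdist x y | x y. x \<in> C \<and> y \<in> C \<and> x \<noteq> y}"
          "hdist (ind {}) (ind V) \<in> {hdist x y | x y. x \<in> C \<and> y \<in> C \<and> x \<noteq> y}"
          "hdist (ind {}) (ind W) \<in> {hdist x y | x y. x \<in> C \<and> y \<in> C \<and> x \<noteq> y}"
          by blast+
        then show ?thesis by (simp add: hdist_ind)
      qed
    qed
    then show ?thesis unfolding min_dist_def cU cV cW by (simp add: min.commute min.left_commute)
  qed
  have lcd: "is_LCD n C"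
    unfolding is_LCD_def
  proof
    show "{vzero} \<subseteq> C \<inter> dual_code n C"
      unfolding dual_code_def using lin
      by (auto simp: linear_code_def dotp_def vzero_def)
    show "C \<inter> dual_code n C \<subseteq> {vzero}"
    proof
      fix x assume x: "x \<in> C \<inter> dual_code n C"
      then have orth: "\<And>y. y \<in> C \<Longrightarrow> dotp n y x = 0" unfolding dual_code_def by blast
      have inC: "ind U \<in> C" "ind V \<in> C" "ind W \<in> C" unfolding C_def by auto
      have i1: "U \<inter> V = {a+b..<a+b+c}" "V \<inter> U = {a+b..<a+b+c}" unfolding U_def V_def by auto
      have i2: "U \<inter> W = {..<a}" "W \<inter> U = {..<a}" unfolding U_def W_def by auto
      have i3: "V \<inter> W = {a..<a+b}" "W \<inter> V = {a..<a+b}" unfolding V_def W_def by auto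
      from x consider "x = ind {}" | "x = ind U" | "x = ind V" | "x = ind W"
        unfolding C_def by blast
      then show "x \<in> {vzero}"
      proof cases
        case 1 then show ?thesis by (simp add: vzero_ind)
      next
        case 2
        have "even (a+c)" "even c" using orth[OF inC(1)] orth[OF inC(2)] 2 sub
          by (simp_all add: dotp_ind of_nat_bit cU i1)
        then show ?thesis using odd by auto
      next
        case 3
        have "even (b+c)" "even c" using orth[OF inC(2)] orth[OF inC(1)] 3 sub
          by (simp_all add: dotp_ind of_nat_bit cV i1)
        then show ?thesis using odd by auto
      next
        case 4
        have "even a" "even b" using orth[OF inC(1)] orth[OF inC(2)] 4 sub
          by (simp_all add: dotp_ind of_nat_bit i2 i3)
        then show ?thesis using odd by auto
      qed
    qed
  qed
  have "LCD_code n 2 (min (a+b) (min (b+c) (a+c))) C"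
    unfolding LCD_code_def using lin dim md lcd by blast
  then show ?thesis by (rule LCD_ge)
qed

lemma oddI2: "(m::nat) = 2*k+1 \<Longrightarrow> odd m" by simp

theorem proposition2p2:
  fixes r :: nat
  shows "LCD (6*r+3) 2 \<ge> 4*r+2 \<and> LCD (6*r+4) 2 \<ge> 4*r+2 \<and> LCD (6*r+5) 2 \<ge> 4*r+2 \<and>
         LCD (6*r+6) 2 \<ge> 4*r+3 \<and> LCD (6*r+7) 2 \<ge> 4*r+4 \<and> LCD (6*r+8) 2 \<ge> 4*r+5"
proof -
  have o1: "odd ((2*r+1)*(2*r+1)+(2*r+1)*(2*r+1)+(2*r+1)*(2*r+1))"
    by (rule oddI2[where k="6*r*r+6*r+1"]) (simp add: algebra_simps)
  have o2: "odd ((2*r+1)*(2*r+2)+(2*r+2)*(2*r+3)+(2*r+3)*(2*r+1))"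
    by (rule oddI2[where k="6*r*r+12*r+5"]) (simp add: algebra_simps)
  have o3: "odd ((2*r+1)*(2*r+3)+(2*r+3)*(2*r+3)+(2*r+3)*(2*r+1))"
    by (rule oddI2[where k="6*r*r+14*r+7"]) (simp add: algebra_simps)
  have o4: "odd ((2*r+2)*(2*r+3)+(2*r+3)*(2*r+3)+(2*r+3)*(2*r+2))"
    by (rule oddI2[where k="6*r*r+16*r+10"]) (simp add: algebra_simps)
  have "4*r+2 \<le> LCD n 2" if "6*r+3 \<le> n" for n
    using that main_code[of "2*r+1" "2*r+1" "2*r+1" n, OF _ _ _ _ o1] by simp
  moreover have "4*r+3 \<le> LCD (6*r+6) 2"
    using main_code[of "2*r+1" "2*r+2" "2*r+3" "6*r+6", OF _ _ _ _ o2] by simp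
  moreover have "4*r+4 \<le> LCD (6*r+7) 2"
    using main_code[of "2*r+1" "2*r+3" "2*r+3" "6*r+7", OF _ _ _ _ o3] by simp
  moreover have "4*r+5 \<le> LCD (6*r+8) 2"
    using main_code[of "2*r+2" "2*r+3" "2*r+3" "6*r+8", OF _ _ _ _ o4] by simp
  ultimately show ?thesis by simp
qed

end
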